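(* Let $n\ge3$, let $a_0,\dots,a_n$ be indeterminates, $P=\sum_{i=0}^na_ix^i$ and $\boldsymbol F=(P^{(0)},\dots,P^{(n)})$. For $\boldsymbol\mu=(\mu_1,\dots,\mu_m)\in\mathcal M(n)$ with conjugate $\bar{\boldsymbol\mu}$, let $G_0=P$ and $G_i=R_{(\bar\mu_1,\dots,\bar\mu_i)}(\boldsymbol F)$ for $i\ge1$, regarded as a polynomial in $x$ of formal degree $s_i=n-(\bar\mu_1+\cdots+\bar\mu_i)$, and let $\mathcal T_{\boldsymbol\mu}$ be the set of polynomials in $a_0,\dots,a_n$ consisting of all coefficients (in $x$) of $R_{\boldsymbol\gamma}(\boldsymbol F)$ for $\boldsymbol\gamma\in\mathcal M(n)$ with $\boldsymbol\gamma\succeq\bar{\boldsymbol\mu}$ lexicographically, together with $D_j(G_i)$ for $0\le i\le\mu_1-1$ and $1\le j\le\bar\mu_{i+1}$. Let $d_{\rm QXY}$ be the maximum of the total degrees in $a_0,\dots,a_n$ of the polynomials in $\bigcup_{\boldsymbol\mu\in\mathcal M(n)}\mathcal T_{\boldsymbol\mu}$. Then $d_{\rm QXY}=n(n-1)$.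
   Context: $P^{(k)}$ is the $k$-th derivative of $P$. $\mathcal M(n)$ is the set of nonincreasing tuples of positive integers with sum $n$; the conjugate of $\boldsymbol\mu$ is $\bar{\boldsymbol\mu}=(\bar\mu_1,\bar\mu_2,\dots)$ with $\bar\mu_i=\#\{j:\mu_j\ge i\}$; tuples are compared lexicographically after padding with zeros. Subresultants: for $\boldsymbol F=(F_0,\dots,F_t)$, $d_i=\deg F_i$, and $\boldsymbol\delta\in\mathbb{Z}_{\ge0}^t$ with $|\boldsymbol\delta|=\sum\delta_i\le d_0$, put $\delta_0=\max_{\delta_i\neq0,\,i\ge1}(d_i+\delta_i)-d_0$ if this max is $\ge d_0$, else $\delta_0=1$; $\boldsymbol M_{\boldsymbol\delta}(\boldsymbol F)$ is the $(\delta_0+|\boldsymbol\delta|)\times(\delta_0+d_0)$ matrix with rows the coefficient vectors of $x^{\delta_0-1}F_0,\dots,F_0,x^{\delta_1-1}F_1,\dots,F_1,\dots,x^{\delta_t-1}F_t,\dots,F_t$ w.r.t. $x^{\delta_0+d_0-1},\dots,1$; $R_{\boldsymbol\delta}(\boldsymbol F)=\operatorname{dp}\boldsymbol M_{\boldsymbol\delta}(\boldsymbol F)$, where for a $p\times q$ matrix ($p\le q$) $\operatorname{dp}\boldsymbol M=\sum_{i=0}^{q-p}\det[\boldsymbol M_1,\dots,\boldsymbol M_{p-1},\boldsymbol M_{q-i}]x^i$. For $\boldsymbol\delta$ of length $t\le n$, $R_{\boldsymbol\delta}(\boldsymbol F)=R_{\boldsymbol\delta}(P^{(0)},\dots,P^{(t)})$.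 Discriminant sequence: for $G=\sum_{i=0}^s b_ix^i$ (formal degree $s$), the discrimination matrix is the $2s\times2s$ matrix whose rows $2k-1$, $2k$ ($k=1,\dots,s$) are the coefficient vectors of $x^{s-k}G$ and $x^{s-k}G'$ w.r.t. $x^{2s-1},\dots,1$; $D_j(G)$ is its leading principal $2j\times2j$ minor. *)

theory Defs
  imports "HOL-Computational_Algebra.Polynomial" "HOL-Library.Poly_Mapping"
          "Jordan_Normal_Form.Determinant"
begin

text \<open>Multivariate polynomials over the integers in the indeterminates a_0, a_1, ...
  (variable i is a_i); a monomial is a finitely supported exponent vector.\<close>
type_synonym mpoly = "(nat \<Rightarrow>\<^sub>0 nat) \<Rightarrow>\<^sub>0 int"

definition var_a :: "nat \<Rightarrow> mpoly" where
  "var_a i = Poly_Mapping.single (Poly_Mapping.single i 1) 1"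

text \<open>Total degree (the zero polynomial is given total degree 0).\<close>
definition total_degree :: "mpoly \<Rightarrow> nat" where
  "total_degree p = Max (insert 0 ((\<lambda>m. \<Sum>v\<in>Poly_Mapping.keys m. Poly_Mapping.lookup m v) ` Poly_Mapping.keys p))"

definition genP :: "nat \<Rightarrow> mpoly poly" where
  "genP n = (\<Sum>i\<le>n. monom (var_a i) i)"

definition nderiv :: "nat \<Rightarrow> 'a::{comm_semiring_1,semiring_no_zero_divisors} poly \<Rightarrow> 'a poly" where
  "nderiv k p = (pderiv ^^ k) p"

definition partitions :: "nat \<Rightarrow> nat list set" where
  "partitions n = {mu. sorted_wrt (\<ge>) mu \<and> (\<forall>x\<in>set mu. 0 < x) \<and> sum_list mu = n}"

definition conjugate :: "nat list \<Rightarrow> nat list" where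
  "conjugate mu = map (\<lambda>i. length (filter (\<lambda>m. i \<le> m) mu)) [1..<Max (insert 0 (set mu)) + 1]"

definition pad :: "nat \<Rightarrow> nat list \<Rightarrow> nat list" where
  "pad N xs = xs @ replicate (N - length xs) 0"

definition lex_ge :: "nat list \<Rightarrow> nat list \<Rightarrow> bool" where
  "lex_ge xs ys = (let N = max (length xs) (length ys); xs' = pad N xs; ys' = pad N ys in
     xs' = ys' \<or> (\<exists>k<N. take k xs' = take k ys' \<and> xs' ! k > ys' ! k))"

text \<open>dp of a p x q matrix (p \<le> q): sum_{i=0}^{q-p} det[M_1,...,M_{p-1},M_{q-i}] x^i,
  where M_j is the j-th column (1-based).\<close>
definition dp :: "'a::comm_ring_1 mat \<Rightarrow> 'a poly" where
  "dp M = (let p = dim_row M; q = dim_col M in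
     (\<Sum>i\<le>q - p. monom (det (mat p p (\<lambda>(r, c).
        if c < p - 1 then M $$ (r, c) else M $$ (r, q - i - 1)))) i))"

text \<open>Row vector of the coefficients of x^e * f with respect to x^(N-1), ..., x, 1.\<close>
definition coeff_row :: "nat \<Rightarrow> nat \<Rightarrow> 'a::zero poly \<Rightarrow> nat \<Rightarrow> 'a" where
  "coeff_row N e f c = (let k = N - 1 - c in if e \<le> k then coeff f (k - e) else 0)"

text \<open>Subresultant R_delta(F) for F = (F_0,...,F_t) (list Fs of length t+1) and
  delta = (delta_1,...,delta_t) (list ds of length t).\<close>
definition delta0 :: "'a::zero poly list \<Rightarrow> nat list \<Rightarrow> nat" where
  "delta0 Fs ds = (let d = (\<lambda>i. degree (Fs ! i));
      S = {d (i+1) + ds ! i | i. i < length ds \<and> ds ! i \<noteq> 0} in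
     if S \<noteq> {} \<and> Max S \<ge> d 0 then Max S - d 0 else 1)"

text \<open>Rows in order: x^(delta_0-1) F_0, ..., F_0, x^(delta_1-1) F_1, ..., F_1, ...;
  as a list of (polynomial index, shift exponent).\<close>
definition row_list :: "nat \<Rightarrow> nat list \<Rightarrow> (nat \<times> nat) list" where
  "row_list dz ds = map (\<lambda>e. (0, e)) (rev [0..<dz]) @
     concat (map (\<lambda>i. map (\<lambda>e. (i + 1, e)) (rev [0..<ds ! i])) [0..<length ds])"

definition subres_matrix :: "'a::zero poly list \<Rightarrow> nat list \<Rightarrow> 'a mat" where
  "subres_matrix Fs ds = (let dz = delta0 Fs ds; rows = row_list dz ds;
      N = dz + degree (Fs ! 0) in
     mat (length rows) N (\<lambda>(r, c). coeff_row N (snd (rows ! r)) (Fs ! fst (rows ! r)) c))"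

definition subres :: "'a::comm_ring_1 poly list \<Rightarrow> nat list \<Rightarrow> 'a poly" where
  "subres Fs ds = dp (subres_matrix Fs ds)"

text \<open>R_delta(F) for F = (P^(0),...,P^(n)): uses (P^(0),...,P^(t)), t = length delta.\<close>
definition R_F :: "nat \<Rightarrow> nat list \<Rightarrow> mpoly poly" where
  "R_F n ds = subres (map (\<lambda>i. nderiv i (genP n)) [0..<length ds + 1]) ds"

text \<open>Discrimination matrix of G regarded with formal degree s (2s x 2s); rows 2k-1, 2k
  (k = 1..s) are coefficients of x^(s-k) G and x^(s-k) G' w.r.t. x^(2s-1),...,1.\<close>
definition discr_matrix :: "nat \<Rightarrow> 'a::{comm_semiring_1,semiring_no_zero_divisors} poly \<Rightarrow> 'a mat" where
  "discr_matrix s G = mat (2*s) (2*s) (\<lambda>(r, c).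
     let k = r div 2 + 1 in
     if even r then coeff_row (2*s) (s - k) G c else coeff_row (2*s) (s - k) (pderiv G) c)"

definition Dj :: "nat \<Rightarrow> nat \<Rightarrow> 'a::{comm_ring_1,semiring_no_zero_divisors} poly \<Rightarrow> 'a" where
  "Dj s j G = det (mat (2*j) (2*j) (\<lambda>(r, c). discr_matrix s G $$ (r, c)))"

definition G_mu :: "nat \<Rightarrow> nat list \<Rightarrow> nat \<Rightarrow> mpoly poly" where
  "G_mu n mu i = (if i = 0 then genP n else R_F n (take i (conjugate mu)))"

definition s_mu :: "nat \<Rightarrow> nat list \<Rightarrow> nat \<Rightarrow> nat" where
  "s_mu n mu i = n - sum_list (take i (conjugate mu))"

definition T_mu :: "nat \<Rightarrow> nat list \<Rightarrow> mpoly set" where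
  "T_mu n mu =
     {coeff (R_F n gamma) k | gamma k. gamma \<in> partitions n \<and> lex_ge gamma (conjugate mu)
                                     \<and> k \<le> degree (R_F n gamma)}
   \<union> {Dj (s_mu n mu i) j (G_mu n mu i) | i j. i \<le> hd mu - 1 \<and> 1 \<le> j \<and> j \<le> conjugate mu ! i}"

definition d_QXY :: "nat \<Rightarrow> nat" where
  "d_QXY n = Max (total_degree ` (\<Union>mu\<in>partitions n. T_mu n mu))"

end

theory Submission
  imports Defs
begin


definition mdeg :: "(nat \<Rightarrow>\<^sub>0 nat) \<Rightarrow> nat" where
  "mdeg m = (\<Sum>v\<in>Poly_Mapping.keys m. Poly_Mapping.lookup m v)"

lemma mdeg_superset: "finite K \<Longrightarrow> Poly_Mapping.keys m \<subseteq> K \<Longrightarrow> mdeg m = (\<Sum>v\<in>K. Poly_Mapping.lookup m v)"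
  unfolding mdeg_def by (rule sum.mono_neutral_left) (auto simp: in_keys_iff)

lemma mdeg_add: "mdeg (a + b) = mdeg a + mdeg b"
proof -
  let ?K = "Poly_Mapping.keys a \<union> Poly_Mapping.keys b"
  have "Poly_Mapping.keys (a+b) \<subseteq> ?K" by (rule keys_add)
  then have "mdeg (a+b) = (\<Sum>v\<in>?K. Poly_Mapping.lookup (a+b) v)" by (intro mdeg_superset) auto
  also have "\<dots> = (\<Sum>v\<in>?K. Poly_Mapping.lookup a v) + (\<Sum>v\<in>?K. Poly_Mapping.lookup b v)"
    by (simp add: lookup_add sum.distrib)
  also have "\<dots> = mdeg a + mdeg b" by (subst (1 2) mdeg_superset[of ?K]) auto
  finally show ?thesis .
qed

lemma mdeg_zero[simp]: "mdeg 0 = 0" by (simp add: mdeg_def)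

definition homog :: "nat \<Rightarrow> mpoly \<Rightarrow> bool" where
  "homog d p \<longleftrightarrow> (\<forall>m\<in>Poly_Mapping.keys p. mdeg m = d)"

lemma homog_0[simp]: "homog d 0" by (simp add: homog_def)

lemma homog_add: "homog d p \<Longrightarrow> homog d q \<Longrightarrow> homog d (p + q)"
  unfolding homog_def using keys_add[of p q] by blast

lemma homog_uminus: "homog d p \<Longrightarrow> homog d (- p)"
  unfolding homog_def by simp

lemma homog_diff: "homog d p \<Longrightarrow> homog d q \<Longrightarrow> homog d (p - q)"
  using homog_add[of d p "-q"] homog_uminus[of d q] by simp

lemma homog_mult: "homog d p \<Longrightarrow> homog e q \<Longrightarrow> homog (d + e) (p * q)"
  unfolding homog_def using keys_mult[of p q] by (force simp: mdeg_add)

lemma homog_sum: "(\<And>i. i \<in> I \<Longrightarrow> homog d (f i)) \<Longrightarrow> homog d (\<Sum>i\<in>I. f i)"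
  by (induction I rule: infinite_finite_induct) (auto intro: homog_add)

lemma homog_prod: "finite I \<Longrightarrow> (\<And>i. i \<in> I \<Longrightarrow> homog d (f i)) \<Longrightarrow> homog (card I * d) (\<Prod>i\<in>I. f i)"
proof (induction I rule: finite_induct)
  case empty
  then show ?case by (simp add: homog_def)
next
  case (insert x F)
  then show ?case using homog_mult[of d "f x" "card F * d"] by (simp add: add.commute)
qed

lemma homog_of_int: "homog 0 (of_int k)"
  by (simp add: homog_def flip: single_of_int)

lemma homog_of_nat: "homog 0 (of_nat k)"
  by (simp add: homog_def flip: single_of_nat)

lemma homog_of_nat_mult: "homog d p \<Longrightarrow> homog d (of_nat k * p)"
  using homog_mult[OF homog_of_nat, of d p k] by simp

lemma homog_var_a: "homog 1 (var_a i)"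
  by (simp add: homog_def var_a_def mdeg_def)

lemma total_degree_le: "homog d p \<Longrightarrow> total_degree p \<le> d"
  unfolding total_degree_def homog_def mdeg_def[symmetric]
  by (auto intro!: Max.boundedI)

lemma total_degree_eq: "homog d p \<Longrightarrow> p \<noteq> 0 \<Longrightarrow> total_degree p = d"
proof -
  assume h: "homog d p" and p: "p \<noteq> 0"
  then obtain m where m: "m \<in> Poly_Mapping.keys p" by (metis keys_eq_empty all_not_in_conv)
  have "d \<le> total_degree p" unfolding total_degree_def mdeg_def[symmetric]
    using m h unfolding homog_def by (intro Max_ge_iff[THEN iffD2]) auto
  with total_degree_le[OF h] show ?thesis by simp
qed

lemma homog_det: assumes A: "A \<in> carrier_mat k k" and h: "\<And>i j. i < k \<Longrightarrow> j < k \<Longrightarrow> homog d (A $$ (i,j))"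
  shows "homog (k * d) (det A)"
  unfolding det_def' [OF A]
proof (rule homog_sum)
  fix p assume "p \<in> {p. p permutes {0..<k}}"
  then have pk: "\<And>i. i < k \<Longrightarrow> p i < k" by (auto dest: permutes_in_image)
  have "homog (card {0..<k} * d) (\<Prod>i = 0..<k. A $$ (i, p i))"
    by (rule homog_prod) (auto intro: h pk)
  then show "homog (k * d) (signof p * (\<Prod>i = 0..<k. A $$ (i, p i)))"
    using homog_mult[OF homog_of_int] by (simp add: sign_def)
qed

definition phom :: "nat \<Rightarrow> mpoly poly \<Rightarrow> bool" where
  "phom d f \<longleftrightarrow> (\<forall>j. homog d (coeff f j))"

lemma coeff_genP: "coeff (genP n) j = (if j \<le> n then var_a j else 0)"
  unfolding genP_def by (simp add: coeff_sum coeff_monom)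

lemma var_a_nz: "var_a i \<noteq> 0"
  unfolding var_a_def by (metis lookup_single_eq lookup_zero zero_neq_one)

lemma degree_genP: "degree (genP n) = n"
proof (rule antisym)
  show "degree (genP n) \<le> n" by (rule degree_le) (auto simp: coeff_genP)
  show "n \<le> degree (genP n)" by (rule le_degree) (simp add: coeff_genP var_a_nz)
qed

lemma phom_genP: "phom 1 (genP n)"
  unfolding phom_def coeff_genP using homog_var_a by auto

lemma phom_pderiv: "phom d f \<Longrightarrow> phom d (pderiv f)"
  unfolding phom_def coeff_pderiv using homog_of_nat_mult by blast

lemma nderiv_Suc: "nderiv (Suc i) p = pderiv (nderiv i p)"
  by (simp add: nderiv_def)

lemma nderiv_0[simp]: "nderiv 0 p = p"
  by (simp add: nderiv_def)

lemma phom_nderiv: "phom 1 (nderiv i (genP n))"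
proof (induction i)
  case 0
  then show ?case by (simp only: nderiv_0 phom_genP)
next
  case (Suc i)
  then show ?case by (simp only: nderiv_Suc phom_pderiv)
qed

lemma degree_nderiv: "degree (nderiv i (genP n)) = n - i"
  by (induction i) (auto simp: nderiv_Suc degree_genP degree_pderiv)

lemma coeff_dp: "coeff (dp M) i = (if i \<le> dim_col M - dim_row M then
   det (mat (dim_row M) (dim_row M) (\<lambda>(r, c).
        if c < dim_row M - 1 then M $$ (r, c) else M $$ (r, dim_col M - i - 1))) else 0)"
  unfolding dp_def Let_def by (simp add: coeff_sum coeff_monom)

lemma phom_dp: assumes "dim_row M \<le> dim_col M"
  and h: "\<And>r c. r < dim_row M \<Longrightarrow> c < dim_col M \<Longrightarrow> homog d (M $$ (r,c))"
  shows "phom (dim_row M * d) (dp M)"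
  unfolding phom_def coeff_dp
proof (intro allI)
  fix i
  show "homog (dim_row M * d) (if i \<le> dim_col M - dim_row M then
   det (mat (dim_row M) (dim_row M) (\<lambda>(r, c).
        if c < dim_row M - 1 then M $$ (r, c) else M $$ (r, dim_col M - i - 1))) else 0)"
    using assms by (auto intro!: homog_det h)
qed

lemma row_list_length: "length (row_list dz ds) = dz + sum_list ds"
proof -
  have "sum_list (map (\<lambda>i. ds ! i) [0..<length ds]) = sum_list ds"
    by (metis map_nth)
  then show ?thesis unfolding row_list_def by (simp add: length_concat comp_def)
qed

lemma row_list_fst: "x \<in> set (row_list dz ds) \<Longrightarrow> fst x \<le> length ds"
  unfolding row_list_def by auto

lemma subres_matrix_dims:
  "dim_row (subres_matrix Fs ds) = delta0 Fs ds + sum_list ds"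
  "dim_col (subres_matrix Fs ds) = delta0 Fs ds + degree (Fs ! 0)"
  unfolding subres_matrix_def Let_def by (auto simp: row_list_length)

lemma homog_coeff_row: "phom d f \<Longrightarrow> homog d (coeff_row N e f c)"
  unfolding coeff_row_def Let_def phom_def by auto

lemma subres_matrix_entry: "r < dim_row (subres_matrix Fs ds) \<Longrightarrow> c < dim_col (subres_matrix Fs ds) \<Longrightarrow>
  subres_matrix Fs ds $$ (r,c) = (let rows = row_list (delta0 Fs ds) ds in
     coeff_row (delta0 Fs ds + degree (Fs ! 0)) (snd (rows ! r)) (Fs ! fst (rows ! r)) c)"
  unfolding subres_matrix_def Let_def by auto

lemma RF_Fs: "i \<le> length ds \<Longrightarrow> map (\<lambda>i. nderiv i (genP n)) [0..<length ds + 1] ! i = nderiv i (genP n)"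
  by (simp del: upt_Suc)

lemma phom_RF: assumes "sum_list ds \<le> n"
  shows "phom (delta0 (map (\<lambda>i. nderiv i (genP n)) [0..<length ds + 1]) ds + sum_list ds) (R_F n ds)"
proof -
  let ?Fs = "map (\<lambda>i. nderiv i (genP n)) [0..<length ds + 1]"
  let ?M = "subres_matrix ?Fs ds"
  have d0: "degree (?Fs ! 0) = n" using RF_Fs[of 0 ds n] by (simp add: degree_genP del: upt_Suc)
  have "phom (dim_row ?M * 1) (dp ?M)"
  proof (rule phom_dp)
    show "dim_row ?M \<le> dim_col ?M" using assms d0 by (simp add: subres_matrix_dims)
    fix r c assume r: "r < dim_row ?M" and c: "c < dim_col ?M"
    let ?rows = "row_list (delta0 ?Fs ds) ds"
    have "r < length ?rows" using r by (simp add: subres_matrix_dims row_list_length)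
    then have "fst (?rows ! r) \<le> length ds" using row_list_fst nth_mem by blast
    then have "?Fs ! fst (?rows ! r) = nderiv (fst (?rows ! r)) (genP n)" by (rule RF_Fs)
    then show "homog 1 (?M $$ (r,c))" unfolding subres_matrix_entry[OF r c] Let_def
      by (metis homog_coeff_row phom_nderiv)
  qed
  then show ?thesis unfolding R_F_def subres_def by (simp add: subres_matrix_dims)
qed

lemma homog_Dj: assumes "phom d G" "j \<le> s"
  shows "homog (2 * j * d) (Dj s j G)"
proof -
  have "homog ((2*j) * d) (Dj s j G)" unfolding Dj_def
  proof (rule homog_det)
    fix r c assume "r < 2*j" "c < 2*j"
    then show "homog d (mat (2 * j) (2 * j) (\<lambda>(r, c). discr_matrix s G $$ (r, c)) $$ (r, c))"
      using assms by (auto simp: discr_matrix_def Let_def intro: homog_coeff_row phom_pderiv)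
  qed auto
  then show ?thesis by simp
qed

abbreviation FsP :: "nat \<Rightarrow> nat list \<Rightarrow> mpoly poly list" where
  "FsP n ds \<equiv> map (\<lambda>i. nderiv i (genP n)) [0..<length ds + 1]"

lemma delta0_le: assumes B: "\<And>x. x \<in> set ds \<Longrightarrow> x \<le> B" and n: "n \<ge> 1"
  shows "delta0 (FsP n ds) ds \<le> max 1 (B - 1)"
proof -
  define S where "S = {degree (FsP n ds ! (i+1)) + ds ! i | i. i < length ds \<and> ds ! i \<noteq> 0}"
  have d0: "degree (FsP n ds ! 0) = n" using RF_Fs[of 0 ds n] by (simp add: degree_genP del: upt_Suc)
  have fin: "finite S" unfolding S_def by simp
  have bnd: "x \<le> n - 1 + B" if "x \<in> S" for x
  proof -
    from that obtain i where i: "i < length ds" "x = degree (FsP n ds ! (i+1)) + ds ! i"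
      unfolding S_def by auto
    have "FsP n ds ! (i+1) = nderiv (i+1) (genP n)" using i by (intro RF_Fs) simp
    then have "degree (FsP n ds ! (i+1)) \<le> n - 1" by (simp add: degree_nderiv)
    moreover have "ds ! i \<le> B" using i B nth_mem by blast
    ultimately show ?thesis using i by simp
  qed
  have eq: "delta0 (FsP n ds) ds = (if S \<noteq> {} \<and> Max S \<ge> n then Max S - n else 1)"
    unfolding delta0_def Let_def S_def d0 by simp
  have mx: "S \<noteq> {} \<Longrightarrow> Max S \<le> n - 1 + B" using fin bnd by simp
  show ?thesis
  proof (cases "S \<noteq> {} \<and> Max S \<ge> n")
    case True
    then have "Max S \<le> n - 1 + B" using mx by blast
    with True eq n show ?thesis by simp
  next
    case False
    with eq show ?thesis by simp
  qed
qed

lemma delta0_single: assumes "a \<ge> 1" "n \<ge> 1"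
  shows "delta0 (FsP n [a]) [a] = a - 1"
proof -
  have S: "{degree (FsP n [a] ! (i+1)) + [a] ! i | i. i < length [a] \<and> [a] ! i \<noteq> 0} = {n - 1 + a}"
    using assms by (auto simp: degree_nderiv nderiv_Suc[symmetric] simp del: nderiv_Suc)
  have d0: "degree (FsP n [a] ! 0) = n" by (simp add: degree_genP)
  show ?thesis unfolding delta0_def Let_def S d0 using assms by simp
qed

lemma partitions_pos: "mu \<in> partitions n \<Longrightarrow> x \<in> set mu \<Longrightarrow> 0 < x"
  by (simp add: partitions_def)

lemma partitions_le: "mu \<in> partitions n \<Longrightarrow> x \<in> set mu \<Longrightarrow> x \<le> n"
  unfolding partitions_def using member_le_sum_list by blast

lemma length_le_sum_pos: "(\<And>x. x \<in> set xs \<Longrightarrow> (0::nat) < x) \<Longrightarrow> length xs \<le> sum_list xs"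
  by (induction xs) force+

lemma partitions_length: "mu \<in> partitions n \<Longrightarrow> length mu \<le> n"
  using length_le_sum_pos[of mu] unfolding partitions_def by auto

lemma finite_partitions: "finite (partitions n)"
proof (rule finite_subset)
  show "partitions n \<subseteq> {xs. set xs \<subseteq> {..n} \<and> length xs \<le> n}"
    using partitions_le partitions_length by blast
  show "finite {xs. set xs \<subseteq> {..n} \<and> length xs \<le> n}"
    by (rule finite_lists_length_le) simp
qed

lemma length_conjugate: "length (conjugate mu) = Max (insert 0 (set mu))"
  by (simp add: conjugate_def)

lemma nth_conjugate: "l < length (conjugate mu) \<Longrightarrow> conjugate mu ! l = length (filter (\<lambda>m. Suc l \<le> m) mu)"
  by (simp add: conjugate_def length_conjugate del: upt_Suc)

lemma conj_sum_aux: "(\<Sum>l<L. length (filter (\<lambda>m. Suc l \<le> m) xs)) \<le> sum_list xs"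
proof (induction xs)
  case Nil
  then show ?case by simp
next
  case (Cons x xs)
  have "(\<Sum>l<L. length (filter (\<lambda>m. Suc l \<le> m) (x # xs)))
      = (\<Sum>l<L. (if Suc l \<le> x then 1 else 0)) + (\<Sum>l<L. length (filter (\<lambda>m. Suc l \<le> m) xs))"
    unfolding sum.distrib[symmetric] by (rule sum.cong) auto
  also have "(\<Sum>l<L. (if Suc l \<le> x then 1 else 0::nat)) = card {l. l < L \<and> l < x}"
    by (simp add: sum.If_cases Suc_le_eq Int_def conj_commute)
  also have "card {l. l < L \<and> l < x} \<le> x"
    by (rule order_trans[OF card_mono[of "{..<x}"]]) auto
  finally show ?case using Cons by simp
qed

lemma sum_take_conjugate: assumes "mu \<in> partitions n"
  shows "sum_list (take L (conjugate mu)) \<le> n"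
proof -
  let ?c = "conjugate mu"
  let ?L = "min L (length ?c)"
  have "sum_list (take L ?c) = (\<Sum>l<?L. ?c ! l)"
    by (simp add: sum_list_sum_nth lessThan_atLeast0 min.commute)
  also have "\<dots> = (\<Sum>l<?L. length (filter (\<lambda>m. Suc l \<le> m) mu))"
    by (rule sum.cong) (auto simp: nth_conjugate)
  also have "\<dots> \<le> sum_list mu" by (rule conj_sum_aux)
  finally show ?thesis using assms by (simp add: partitions_def)
qed

lemma conjugate_0: assumes "mu \<in> partitions n" "0 < length (conjugate mu)"
  shows "conjugate mu ! 0 = length mu"
  using assms by (auto simp: nth_conjugate partitions_def Suc_le_eq intro!: arg_cong[where f=length] filter_True)

lemma conjugate_le0: assumes "mu \<in> partitions n" "l < length (conjugate mu)"
  shows "conjugate mu ! l \<le> conjugate mu ! 0"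
proof -
  have "conjugate mu ! l = length (filter (\<lambda>m. Suc l \<le> m) mu)" using assms by (simp add: nth_conjugate)
  also have "\<dots> \<le> length mu" by simp
  moreover have "0 < length (conjugate mu)" using assms(2) by linarith
  ultimately show ?thesis using conjugate_0[OF assms(1)] by simp
qed

lemma set_conjugate_le0: assumes "mu \<in> partitions n" "x \<in> set (conjugate mu)"
  shows "x \<le> conjugate mu ! 0"
  using assms conjugate_le0 by (metis in_set_conv_nth)

lemma partitions_hd: assumes "mu \<in> partitions n" "n \<ge> 1"
  shows "mu \<noteq> []" "hd mu = Max (insert 0 (set mu))"
proof -
  show ne: "mu \<noteq> []" using assms by (auto simp: partitions_def)
  then obtain x xs where mu: "mu = x # xs" by (cases mu) auto
  have "\<forall>y\<in>set xs. y \<le> x" using assms(1) mu by (simp add: partitions_def)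
  then show "hd mu = Max (insert 0 (set mu))" using mu by (auto intro!: Max_eqI[symmetric])
qed

lemma consec_nonneg: "0 \<le> (x::int) * (x - 1)"
  by (cases "x \<le> 0") (auto intro: mult_nonpos_nonpos)

lemma arith_bound: fixes j S d n :: nat
  assumes "1 \<le> j" "S + j \<le> n" "d + 1 \<le> S"
  shows "2*j*(d+S) \<le> n*(n-1)"
proof -
  have h1: "d + S \<le> 2*(n-j) - 1" using assms by linarith
  have "int (2*j*(2*(n-j)-1)) = 2 * int j * (2 * (int n - int j) - 1)" using assms by (simp add: of_nat_diff)
  also have "\<dots> \<le> int n * (int n - 1)"
    using consec_nonneg[of "int n - 2 * int j"] by (simp add: algebra_simps)
  also have "\<dots> = int (n * (n-1))" using assms by (simp add: of_nat_diff)
  finally have "2*j*(2*(n-j)-1) \<le> n*(n-1)" by linarith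
  moreover have "2*j*(d+S) \<le> 2*j*(2*(n-j)-1)" using h1 by simp
  ultimately show ?thesis by linarith
qed

lemma T_mu_bound: assumes n: "n \<ge> 3" and mu: "mu \<in> partitions n" and x: "x \<in> T_mu n mu"
  shows "total_degree x \<le> n*(n-1)"
proof -
  have "n*2 \<le> n*(n-1)" using n by (intro mult_le_mono2) linarith
  then have n2: "2*n \<le> n*(n-1)" by (simp add: mult.commute)
  from x consider (R) gamma k where "x = coeff (R_F n gamma) k" "gamma \<in> partitions n"
    | (D) i j where "x = Dj (s_mu n mu i) j (G_mu n mu i)" "i \<le> hd mu - 1" "1 \<le> j" "j \<le> conjugate mu ! i"
    using x unfolding T_mu_def by (elim UnE CollectE exE conjE) blast+
  then show ?thesis
  proof cases
    case R
    have sg: "sum_list gamma = n" using R(2) by (simp add: partitions_def)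
    have "delta0 (FsP n gamma) gamma \<le> max 1 (n - 1)"
      using n by (intro delta0_le) (auto intro: partitions_le[OF R(2)])
    then have "delta0 (FsP n gamma) gamma \<le> n - 1" using n by simp
    then have "delta0 (FsP n gamma) gamma + sum_list gamma \<le> n*(n-1)" using sg n2 by linarith
    moreover have hx: "homog (delta0 (FsP n gamma) gamma + sum_list gamma) x"
      using phom_RF[of gamma n] sg R(1) unfolding phom_def by simp
    ultimately show ?thesis using total_degree_le[OF hx] by linarith
  next
    case D
    let ?c = "conjugate mu"
    have ne: "mu \<noteq> []" and hd: "hd mu = Max (insert 0 (set mu))" using partitions_hd[OF mu] n by auto
    have "0 < hd mu" using ne partitions_pos[OF mu] by (cases mu) auto
    then have ilen: "i < length ?c" using D(2) hd by (simp add: length_conjugate)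
    have c0: "?c ! 0 = length mu" using conjugate_0[OF mu] ilen by (metis gr_zeroI less_zeroE)
    have lmu: "length mu \<le> n" by (rule partitions_length[OF mu])
    show ?thesis
    proof (cases "i = 0")
      case True
      have xe: "x = Dj n j (genP n)" using D(1) True by (simp add: G_mu_def s_mu_def)
      have "homog (2*j*1) (Dj n j (genP n))" using D(4) True c0 lmu
        by (intro homog_Dj[OF phom_genP]) simp
      then have hx: "homog (2*j*1) x" using xe by simp
      have "j \<le> n" using D(4) True c0 lmu by simp
      then have "2*j*1 \<le> n*(n-1)" using n2 by linarith
      then show ?thesis using total_degree_le[OF hx] by linarith
    next
      case False
      let ?ds = "take i ?c"
      let ?S = "sum_list ?ds"
      let ?d = "delta0 (FsP n ?ds) ?ds"
      have tk: "take (Suc i) ?c = ?ds @ [?c ! i]" using ilen by (simp add: take_Suc_conv_app_nth)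
      have Sj: "?S + ?c ! i \<le> n" using sum_take_conjugate[OF mu, of "Suc i"] tk by simp
      have l0: "0 < length ?ds" using False ilen by simp
      have "?ds ! 0 = ?c ! 0" using False by simp
      then have "?c ! 0 \<in> set ?ds" using nth_mem[OF l0] by simp
      then have Sh: "?c ! 0 \<le> ?S" by (simp add: member_le_sum_list)
      have elts: "y \<le> ?c ! 0" if "y \<in> set ?ds" for y
      proof -
        have "y \<in> set ?c" using that by (rule in_set_takeD)
        then show ?thesis by (rule set_conjugate_le0[OF mu])
      qed
      have dle: "?d \<le> max 1 (?c ! 0 - 1)" using n by (intro delta0_le elts) auto
      have cil: "?c ! i \<le> ?c ! 0" using conjugate_le0[OF mu ilen] .
      have xe: "x = Dj (n - ?S) j (R_F n ?ds)" using D(1) False by (simp add: G_mu_def s_mu_def)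
      have "homog (2*j*(?d + ?S)) (Dj (n - ?S) j (R_F n ?ds))" using D(4) Sj
        by (intro homog_Dj[OF phom_RF]) auto
      then have hom: "homog (2*j*(?d + ?S)) x" using xe by simp
      have "2*j*(?d + ?S) \<le> n*(n-1)"
      proof (cases "?c ! 0 \<ge> 2")
        case True
        then have "?d \<le> ?c ! 0 - 1" using dle by simp
        then have a1: "?d + 1 \<le> ?S" using Sh True by linarith
        have a2: "?S + j \<le> n" using Sj D(4) by linarith
        show ?thesis by (rule arith_bound[OF D(3) a2 a1])
      next
        case False
        then have j1: "j = 1" using D(3,4) cil by linarith
        have d1: "?d \<le> 1" using dle False by simp
        have "?S + 1 \<le> n" using Sj D(4) j1 by linarith
        then have "?d + ?S \<le> n" using d1 by linarith
        then have "2*j*(?d+?S) \<le> 2*n" using j1 by simp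
        then show ?thesis using n2 by linarith
      qed
      then show ?thesis using total_degree_le[OF hom] by linarith
    qed
  qed
qed




definition wmon :: "(nat \<Rightarrow> int) \<Rightarrow> (nat \<Rightarrow>\<^sub>0 nat) \<Rightarrow> int" where
  "wmon c m = (\<Prod>v\<in>Poly_Mapping.keys m. c v ^ Poly_Mapping.lookup m v)"

lemma wmon_superset: "finite K \<Longrightarrow> Poly_Mapping.keys m \<subseteq> K \<Longrightarrow> wmon c m = (\<Prod>v\<in>K. c v ^ Poly_Mapping.lookup m v)"
  unfolding wmon_def by (rule prod.mono_neutral_left) (auto simp: in_keys_iff)

lemma wmon_add: "wmon c (a + b) = wmon c a * wmon c b"
proof -
  let ?K = "Poly_Mapping.keys a \<union> Poly_Mapping.keys b"
  have "Poly_Mapping.keys (a+b) \<subseteq> ?K" by (rule keys_add)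
  then have "wmon c (a+b) = (\<Prod>v\<in>?K. c v ^ Poly_Mapping.lookup (a+b) v)" by (intro wmon_superset) auto
  also have "\<dots> = (\<Prod>v\<in>?K. c v ^ Poly_Mapping.lookup a v) * (\<Prod>v\<in>?K. c v ^ Poly_Mapping.lookup b v)"
    by (simp add: lookup_add power_add prod.distrib)
  also have "\<dots> = wmon c a * wmon c b" by (subst (1 2) wmon_superset[of ?K]) auto
  finally show ?thesis .
qed

lemma wmon_zero[simp]: "wmon c 0 = 1" by (simp add: wmon_def)

definition ev :: "(nat \<Rightarrow> int) \<Rightarrow> mpoly \<Rightarrow> int" where
  "ev c p = (\<Sum>m\<in>Poly_Mapping.keys p. Poly_Mapping.lookup p m * wmon c m)"

lemma ev_superset: "finite K \<Longrightarrow> Poly_Mapping.keys p \<subseteq> K \<Longrightarrow> ev c p = (\<Sum>m\<in>K. Poly_Mapping.lookup p m * wmon c m)"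
  unfolding ev_def by (rule sum.mono_neutral_left) (auto simp: in_keys_iff)

lemma ev_add: "ev c (p + q) = ev c p + ev c q"
proof -
  let ?K = "Poly_Mapping.keys p \<union> Poly_Mapping.keys q"
  have "ev c (p + q) = (\<Sum>m\<in>?K. Poly_Mapping.lookup (p+q) m * wmon c m)"
    using keys_add[of p q] by (intro ev_superset) auto
  also have "\<dots> = (\<Sum>m\<in>?K. Poly_Mapping.lookup p m * wmon c m) + (\<Sum>m\<in>?K. Poly_Mapping.lookup q m * wmon c m)"
    by (simp add: lookup_add sum.distrib algebra_simps)
  also have "\<dots> = ev c p + ev c q" by (subst (1 2) ev_superset[of ?K]) auto
  finally show ?thesis .
qed

lemma ev_zero[simp]: "ev c 0 = 0" by (simp add: ev_def)

lemma ev_single: "ev c (Poly_Mapping.single m a) = a * wmon c m"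
  by (simp add: ev_def)

lemma ev_sum: "ev c (\<Sum>i\<in>I. f i) = (\<Sum>i\<in>I. ev c (f i))"
  by (induction I rule: infinite_finite_induct) (auto simp: ev_add)

lemma pm_expand: "p = (\<Sum>m\<in>Poly_Mapping.keys p. Poly_Mapping.single m (Poly_Mapping.lookup p m))"
proof (rule poly_mapping_eqI)
  fix k
  show "Poly_Mapping.lookup p k = Poly_Mapping.lookup (\<Sum>m\<in>Poly_Mapping.keys p. Poly_Mapping.single m (Poly_Mapping.lookup p m)) k"
    by (auto simp: lookup_sum lookup_single when_def in_keys_iff)
qed

lemma ev_mult: "ev c (p * q) = ev c p * ev c q"
proof -
  let ?P = "Poly_Mapping.keys p" and ?Q = "Poly_Mapping.keys q"
  have "p * q = (\<Sum>a\<in>?P. Poly_Mapping.single a (Poly_Mapping.lookup p a)) * (\<Sum>b\<in>?Q. Poly_Mapping.single b (Poly_Mapping.lookup q b))"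
    by (subst (1) pm_expand[of p], subst (1) pm_expand[of q]) (rule refl)
  also have "\<dots> = (\<Sum>a\<in>?P. \<Sum>b\<in>?Q. Poly_Mapping.single (a+b) (Poly_Mapping.lookup p a * Poly_Mapping.lookup q b))"
    by (simp add: sum_product mult_single)
  finally have "ev c (p * q) = (\<Sum>a\<in>?P. \<Sum>b\<in>?Q. Poly_Mapping.lookup p a * Poly_Mapping.lookup q b * wmon c (a+b))"
    by (simp add: ev_sum ev_single)
  also have "\<dots> = (\<Sum>a\<in>?P. Poly_Mapping.lookup p a * wmon c a) * (\<Sum>b\<in>?Q. Poly_Mapping.lookup q b * wmon c b)"
    by (simp add: sum_product wmon_add algebra_simps)
  finally show ?thesis by (simp add: ev_def)
qed

lemma ev_one: "ev c 1 = 1"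
proof -
  have "(1::mpoly) = Poly_Mapping.single 0 1" by simp
  then show ?thesis by (metis ev_single mult_1 wmon_zero)
qed

interpretation evh: comm_ring_hom "ev c" for c
  by unfold_locales (simp_all add: ev_add ev_mult ev_one)

lemma ev_var_a: "ev c (var_a i) = c i"
  by (simp add: var_a_def ev_single wmon_def)




lemma mult_entry: "i < dim_row A \<Longrightarrow> j < dim_col B \<Longrightarrow> dim_col A = dim_row B \<Longrightarrow>
  (A * B) $$ (i,j) = (\<Sum>k<dim_row B. A $$ (i,k) * B $$ (k,j))"
  by (simp add: scalar_prod_def lessThan_atLeast0)

lemma dp_mult: assumes E: "E \<in> carrier_mat p p" and M: "M \<in> carrier_mat p q" and pq: "p \<le> q"
  shows "dp (E * M) = smult (det E) (dp M)"
proof (rule poly_eqI)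
  fix i
  have dims: "dim_row (E * M) = p" "dim_col (E * M) = q" "dim_row M = p" "dim_col M = q" using E M by auto
  show "coeff (dp (E * M)) i = coeff (smult (det E) (dp M)) i"
  proof (cases "i \<le> q - p")
    case True
    define sel where "sel c = (if c < p - 1 then c else q - i - 1)" for c
    have sel: "c < p \<Longrightarrow> sel c < q" for c using pq True by (auto simp: sel_def)
    let ?A = "mat p p (\<lambda>(r, c). if c < p - 1 then M $$ (r, c) else M $$ (r, q - i - 1))"
    have "mat p p (\<lambda>(r, c). if c < p - 1 then (E * M) $$ (r, c) else (E * M) $$ (r, q - i - 1)) = E * ?A"
    proof (rule eq_matI)
      fix r c assume r: "r < dim_row (E * ?A)" and c: "c < dim_col (E * ?A)"
      then have rp: "r < p" and cp: "c < p" using E by auto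
      have "mat p p (\<lambda>(r, c). if c < p - 1 then (E * M) $$ (r, c) else (E * M) $$ (r, q - i - 1)) $$ (r, c) = (E * M) $$ (r, sel c)"
        using rp cp by (simp add: sel_def)
      also have "(E * M) $$ (r, sel c) = (\<Sum>k<p. E $$ (r,k) * M $$ (k, sel c))"
        using rp sel[OF cp] E M by (subst mult_entry) auto
      also have "\<dots> = (\<Sum>k<p. E $$ (r,k) * ?A $$ (k, c))"
        by (rule sum.cong) (auto simp: cp sel_def)
      also have "\<dots> = (E * ?A) $$ (r, c)" using rp cp E by (subst mult_entry) auto
      finally show "mat p p (\<lambda>(r, c). if c < p - 1 then (E * M) $$ (r, c) else (E * M) $$ (r, q - i - 1)) $$ (r, c) = (E * ?A) $$ (r, c)" .
    qed (use E in auto)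
    then show ?thesis using True unfolding coeff_dp dims coeff_smult
      using det_mult[OF E, of ?A] by simp
  next
    case False
    then show ?thesis using dims by (simp add: coeff_dp)
  qed
qed

lemma ev_coeff_map: "coeff (map_poly (ev c) f) j = ev c (coeff f j)"
  by (simp add: coeff_map_poly)

lemma ev_coeff_row: "ev c (coeff_row N e f k) = coeff_row N e (map_poly (ev c) f) k"
  by (simp add: coeff_row_def Let_def ev_coeff_map)

lemma ev_pderiv: "map_poly (ev c) (pderiv f) = pderiv (map_poly (ev c) f)"
  by (rule poly_eqI) (simp add: coeff_pderiv ev_coeff_map evh.hom_mult evh.hom_of_nat del: of_nat_Suc)

lemma ev_Dj: assumes "j \<le> s" shows "ev c (Dj s j G) = Dj s j (map_poly (ev c) G)"
proof -
  have "map_mat (ev c) (mat (2*j) (2*j) (\<lambda>(r, k). discr_matrix s G $$ (r, k)))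
      = mat (2*j) (2*j) (\<lambda>(r, k). discr_matrix s (map_poly (ev c) G) $$ (r, k))"
    using assms by (intro eq_matI) (auto simp: discr_matrix_def Let_def ev_coeff_row ev_pderiv)
  then show ?thesis unfolding Dj_def evh.hom_det[symmetric] by simp
qed

lemma ev_dp: assumes "dim_row M \<le> dim_col M" shows "map_poly (ev c) (dp M) = dp (map_mat (ev c) M)"
proof (rule poly_eqI)
  fix i
  show "coeff (map_poly (ev c) (dp M)) i = coeff (dp (map_mat (ev c) M)) i"
    unfolding ev_coeff_map coeff_dp index_map_mat(2,3)
  proof (cases "i \<le> dim_col M - dim_row M")
    case True
    let ?A = "mat (dim_row M) (dim_row M) (\<lambda>(r, k). if k < dim_row M - 1 then M $$ (r, k) else M $$ (r, dim_col M - i - 1))"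
    have "map_mat (ev c) ?A = mat (dim_row M) (dim_row M) (\<lambda>(r, k). if k < dim_row M - 1 then map_mat (ev c) M $$ (r, k) else map_mat (ev c) M $$ (r, dim_col M - i - 1))"
      using assms True by (intro eq_matI) auto
    then show "ev c (if i \<le> dim_col M - dim_row M then det ?A else 0) = (if i \<le> dim_col M - dim_row M then
     det (mat (dim_row M) (dim_row M) (\<lambda>(r, k). if k < dim_row M - 1 then map_mat (ev c) M $$ (r, k) else map_mat (ev c) M $$ (r, dim_col M - i - 1))) else 0)"
      using True by (simp flip: evh.hom_det)
  qed simp
qed




lemma Dj_smult: assumes "j \<le> s" shows "Dj s j (smult K G) = K^(2*j) * Dj s j G"
proof -
  have "mat (2*j) (2*j) (\<lambda>(r, c). discr_matrix s (smult K G) $$ (r, c))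
      = K \<cdot>\<^sub>m mat (2*j) (2*j) (\<lambda>(r, c). discr_matrix s G $$ (r, c))"
    using assms by (intro eq_matI) (auto simp: discr_matrix_def Let_def coeff_row_def pderiv_smult)
  then show ?thesis unfolding Dj_def by simp
qed

lemma sum_single: assumes "x < (m::nat)" shows "(\<Sum>r<m. (if r = x then a else 0) * f r) = a * (f x :: 'a :: comm_ring_1)"
proof -
  have "(\<Sum>r<m. (if r = x then a else 0) * f r) = (\<Sum>r<m. if r = x then a * f x else 0)" by (rule sum.cong) auto
  also have "\<dots> = a * f x" by (subst sum.delta) (use assms in auto)
  finally show ?thesis .
qed

definition Gx :: "nat \<Rightarrow> int poly" where "Gx b = monom 1 b - 1"

lemma coeff_Gx: "b \<ge> 1 \<Longrightarrow> coeff (Gx b) j = (if j = b then 1 else 0) - (if j = 0 then 1 else 0)"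
  by (simp add: Gx_def coeff_monom)

lemma coeff_pderiv_Gx: "b \<ge> 1 \<Longrightarrow> coeff (pderiv (Gx b)) j = (if j = b - 1 then int b else 0)"
  by (auto simp: coeff_pderiv coeff_Gx)

lemma D_entry: assumes b: "b \<ge> 1" and r: "r < 2*b" and c: "c < 2*b"
  shows "discr_matrix b (Gx b) $$ (r, c) = (if even r then (if c = r div 2 then 1 else 0) - (if c = b + r div 2 then 1 else 0)
      else (if c = r div 2 + 1 then int b else 0))"
proof -
  have e: "discr_matrix b (Gx b) $$ (r, c) = (if even r then coeff_row (2*b) (b - (r div 2 + 1)) (Gx b) c
      else coeff_row (2*b) (b - (r div 2 + 1)) (pderiv (Gx b)) c)"
    using r c by (simp add: discr_matrix_def Let_def)
  have rb: "r div 2 < b" using r by simp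
  show ?thesis
  proof (cases "even r")
    case True
    then show ?thesis unfolding e using b rb c by (auto simp: coeff_row_def Let_def coeff_Gx)
  next
    case False
    then show ?thesis unfolding e using b rb c by (auto simp: coeff_row_def Let_def coeff_pderiv_Gx; arith)
  qed
qed

lemma Dj_Gx_nz: assumes b: "b \<ge> 1" shows "Dj b b (Gx b) \<noteq> 0"
proof -
  define D where "D = mat (2*b) (2*b) (\<lambda>(r,c). discr_matrix b (Gx b) $$ (r,c))"
  define E :: "int mat" where "E = mat (2*b) (2*b) (\<lambda>(t,r). if t = 0 then (if r = 0 then int b else 0) + (if r = 2*b-1 then 1 else 0)
     else if t \<le> b then (if r = 2*t-1 then 1 else 0) else (if r = 2*(t-b) then 1 else 0))"
  have Dc: "D \<in> carrier_mat (2*b) (2*b)" and Ec: "E \<in> carrier_mat (2*b) (2*b)" by (auto simp: D_def E_def)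
  have Dent: "D $$ (r,c) = (if even r then (if c = r div 2 then 1 else 0) - (if c = b + r div 2 then 1 else 0)
      else (if c = r div 2 + 1 then int b else 0))" if "r < 2*b" "c < 2*b" for r c
    using that D_entry[OF b that] by (simp add: D_def)
  have T: "(E * D) $$ (t,c) = (if t = 0 then (if c = 0 then int b else 0) else if t \<le> b then (if c = t then int b else 0)
      else (if c = t - b then 1 else 0) - (if c = t then 1 else 0))" if t: "t < 2*b" and c: "c < 2*b" for t c
  proof -
    have "(E * D) $$ (t,c) = (\<Sum>r<2*b. E $$ (t,r) * D $$ (r,c))"
      using t c Ec Dc by (subst mult_entry) auto
    also have "\<dots> = (\<Sum>r<2*b. (if t = 0 then (if r = 0 then int b else 0) + (if r = 2*b-1 then 1 else 0)
     else if t \<le> b then (if r = 2*t-1 then 1 else 0) else (if r = 2*(t-b) then 1 else 0)) * D $$ (r,c))"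
      using t by (intro sum.cong) (auto simp: E_def)
    finally have ED: "(E * D) $$ (t,c) = \<dots>" .
    show ?thesis
    proof (cases "t = 0")
      case True
      have "(E * D) $$ (t,c) = (\<Sum>r<2*b. (if r = 0 then int b else 0) * D $$ (r,c)) + (\<Sum>r<2*b. (if r = 2*b-1 then 1 else 0) * D $$ (r,c))"
        unfolding ED using True by (simp add: distrib_right sum.distrib)
      also have "\<dots> = int b * D $$ (0,c) + D $$ (2*b-1, c)"
        using b by (simp add: sum_single)
      also have "\<dots> = (if c = 0 then int b else 0)"
      proof -
        have o: "odd (2*b-1)" using b by simp
        have dv: "(2*b-1) div 2 = b - 1" using b by simp
        show ?thesis using b c o dv by (simp add: Dent)
      qed
      finally show ?thesis using True by simp
    next
      case False
      show ?thesis
      proof (cases "t \<le> b")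
        case True
        have "(E * D) $$ (t,c) = (\<Sum>r<2*b. (if r = 2*t-1 then 1 else 0) * D $$ (r,c))"
          unfolding ED using True False by simp
        also have "\<dots> = D $$ (2*t-1, c)"
        proof -
          have "2*t-1 < 2*b" using True False by linarith
          from sum_single[OF this, of 1 "\<lambda>r. D $$ (r,c)"] show ?thesis by simp
        qed
        also have "\<dots> = (if c = t then int b else 0)"
        proof -
          have o: "odd (2*t-1)" using False by simp
          have dv: "(2*t-1) div 2 + 1 = t" using False by simp
          have r: "2*t-1 < 2*b" using True False by linarith
          show ?thesis using c o dv Dent[OF r c] by simp
        qed
        finally show ?thesis using True False by simp
      next
        case tb: False
        have "(E * D) $$ (t,c) = (\<Sum>r<2*b. (if r = 2*(t-b) then 1 else 0) * D $$ (r,c))"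
          unfolding ED using tb False by simp
        also have "\<dots> = D $$ (2*(t-b), c)" using t tb by (simp add: sum_single)
        also have "\<dots> = (if c = t - b then 1 else 0) - (if c = t then 1 else 0)"
          using t c tb by (simp add: Dent)
        finally show ?thesis using tb False by simp
      qed
    qed
  qed
  have EDc: "E * D \<in> carrier_mat (2*b) (2*b)" using Ec Dc by simp
  have "det (E * D) = prod_list (diag_mat (E * D))"
    by (rule det_lower_triangular[OF _ EDc]) (auto simp: T)
  also have "\<dots> = (\<Prod>i = 0..<2*b. (E * D) $$ (i,i))" using Ec by (simp add: prod_list_diag_prod)
  also have "\<dots> \<noteq> 0" using b by (auto simp: T)
  finally have "det E * det D \<noteq> 0" using det_mult[OF Ec Dc] by simp
  then show ?thesis unfolding Dj_def D_def by simp
qed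




lemma row_list_single: "row_list dz [a] = map (\<lambda>e. (0, e)) (rev [0..<dz]) @ map (\<lambda>e. (1, e)) (rev [0..<a])"
  by (simp add: row_list_def)

lemma row_list_single_nth: assumes "r < dz + a"
  shows "row_list dz [a] ! r = (if r < dz then (0, dz - 1 - r) else (1, dz + a - 1 - r))"
  using assms by (auto simp: row_list_single nth_append rev_nth)

context
  fixes n a b :: nat
  assumes n3: "n \<ge> 3" and a2: "a \<ge> 2" and b1: "b \<ge> 1" and nab: "a + b = n"
begin

definition cs :: "nat \<Rightarrow> int" where
  "cs i = (if i = n then 1 else if i = b then int n else if i = 0 then - (int n - int b) else 0)"

definition Ps :: "int poly" where "Ps = map_poly (ev cs) (genP n)"

lemma coeff_Ps: "coeff Ps i = (if i \<le> n then cs i else 0)"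
  by (simp add: Ps_def ev_coeff_map coeff_genP ev_var_a)

abbreviation "Mt \<equiv> subres_matrix (FsP n [a]) [a]"
abbreviation "Mi \<equiv> map_mat (ev cs) Mt"

lemma Mt_dims: "dim_row Mt = 2*a - 1" "dim_col Mt = a - 1 + n"
proof -
  have d: "delta0 (FsP n [a]) [a] = a - 1" using delta0_single[of a n] a2 n3 by simp
  show "dim_row Mt = 2*a - 1" "dim_col Mt = a - 1 + n"
    using d a2 by (simp_all add: subres_matrix_dims degree_genP)
qed

lemma Mi_entry: assumes r: "r < 2*a - 1" and c: "c < a - 1 + n"
  shows "Mi $$ (r, c) = (if r < a - 1 then coeff_row (a - 1 + n) (a - 2 - r) Ps c
     else coeff_row (a - 1 + n) (2*a - 2 - r) (pderiv Ps) c)"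
proof -
  have d: "delta0 (FsP n [a]) [a] = a - 1" using delta0_single[of a n] a2 n3 by simp
  have rl: "row_list (a - 1) [a] ! r = (if r < a - 1 then (0, a - 2 - r) else (1, 2*a - 2 - r))"
    using r a2 by (subst row_list_single_nth) auto
  have d0: "degree (FsP n [a] ! 0) = n" by (simp add: degree_genP)
  have "Mt $$ (r, c) = (let rows = row_list (delta0 (FsP n [a]) [a]) [a] in
     coeff_row (delta0 (FsP n [a]) [a] + degree (FsP n [a] ! 0)) (snd (rows ! r)) (FsP n [a] ! fst (rows ! r)) c)"
    using r c Mt_dims by (intro subres_matrix_entry) auto
  then have "Mt $$ (r, c) = coeff_row (a - 1 + n) (snd (row_list (a - 1) [a] ! r)) (FsP n [a] ! fst (row_list (a - 1) [a] ! r)) c"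
    unfolding Let_def d d0 .
  moreover have "map_poly (ev cs) (pderiv (genP n)) = pderiv Ps" by (simp add: Ps_def ev_pderiv)
  ultimately show ?thesis using r c Mt_dims rl
    by (auto simp: ev_coeff_row Ps_def nderiv_Suc[of 0, simplified])
qed

definition g :: "nat \<Rightarrow> int" where "g k = (int n - int k) * coeff Ps k"

lemma gr: "int n * coeff_row N e Ps c - coeff_row N (Suc e) (pderiv Ps) c
   = (if e \<le> N - 1 - c then g (N - 1 - c - e) else 0)"
proof -
  consider (lt) "Suc e \<le> N - 1 - c" | (eq) "e = N - 1 - c" | (gt) "e > N - 1 - c" by linarith
  then show ?thesis
  proof cases
    case lt
    then have "Suc (N - 1 - c - Suc e) = N - 1 - c - e" by linarith
    moreover have "int (N - 1 - c - e) = int (Suc (N - 1 - c - Suc e))" using lt by simp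
    ultimately show ?thesis using lt by (simp add: coeff_row_def Let_def coeff_pderiv g_def algebra_simps)
  next
    case eq
    then show ?thesis by (simp add: coeff_row_def Let_def g_def)
  qed (simp add: coeff_row_def Let_def)
qed

lemma g_big: assumes "k > b" shows "g k = 0"
proof (cases "k = n")
  case True
  then show ?thesis by (simp add: g_def)
next
  case False
  then have "coeff Ps k = 0" using assms b1 by (simp add: coeff_Ps cs_def)
  then show ?thesis by (simp add: g_def)
qed

lemma g_small: assumes k: "k \<le> b" shows "g k = int n * (int n - int b) * coeff (Gx b) k"
proof -
  have bn: "b \<noteq> n" "k \<noteq> n" using a2 nab k by auto
  consider "k = b" | "k = 0" | "k \<noteq> b" "k \<noteq> 0" by blast
  then show ?thesis
  proof cases
    case 1
    then show ?thesis using bn b1 k nab by (simp add: g_def coeff_Ps cs_def coeff_Gx)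
  next
    case 2
    then show ?thesis using bn b1 k nab by (simp add: g_def coeff_Ps cs_def coeff_Gx algebra_simps)
  next
    case 3
    then show ?thesis using bn b1 k nab by (simp add: g_def coeff_Ps cs_def coeff_Gx)
  qed
qed

lemma coeff_dPs: assumes "j \<ge> n - 1" shows "coeff (pderiv Ps) j = (if j = n - 1 then int n else 0)"
proof -
  have "Suc j \<noteq> b" "Suc j \<noteq> 0" using assms a2 nab by auto
  then show ?thesis using assms n3 by (auto simp: coeff_pderiv coeff_Ps cs_def)
qed

definition Em :: "int mat" where
  "Em = mat (2*a - 1) (2*a - 1) (\<lambda>(t, r). if t < a then (if r = a - 1 + t then 1 else 0)
     else (if r = t - a then int n else 0) + (if r = t - 1 then -1 else 0))"

lemma Em_carrier: "Em \<in> carrier_mat (2*a - 1) (2*a - 1)" by (simp add: Em_def)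

lemma M2_entry: assumes t: "t < 2*a - 1" and c: "c < a - 1 + n"
  shows "(Em * Mi) $$ (t, c) = (if t < a then coeff_row (a - 1 + n) (a - 1 - t) (pderiv Ps) c
     else (if 2*a - 2 - t \<le> a - 1 + n - 1 - c then g (a - 1 + n - 1 - c - (2*a - 2 - t)) else 0))"
proof -
  have "(Em * Mi) $$ (t, c) = (\<Sum>r<2*a-1. Em $$ (t,r) * Mi $$ (r,c))"
    using t c Mt_dims by (subst mult_entry) (auto simp: Em_def)
  also have "\<dots> = (\<Sum>r<2*a-1. (if t < a then (if r = a - 1 + t then 1 else 0)
     else (if r = t - a then int n else 0) + (if r = t - 1 then -1 else 0)) * Mi $$ (r,c))"
    using t by (intro sum.cong) (auto simp: Em_def)
  finally have ED: "(Em * Mi) $$ (t, c) = \<dots>" .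
  show ?thesis
  proof (cases "t < a")
    case True
    have x: "a - 1 + t < 2*a - 1" using True by linarith
    have "(Em * Mi) $$ (t, c) = Mi $$ (a - 1 + t, c)"
      unfolding ED using True sum_single[OF x, of 1 "\<lambda>r. Mi $$ (r,c)"] by simp
    also have "\<dots> = coeff_row (a - 1 + n) (a - 1 - t) (pderiv Ps) c"
      using x c a2 by (subst Mi_entry) (auto intro!: arg_cong[where f="\<lambda>e. coeff_row _ e _ _"])
    finally show ?thesis using True by simp
  next
    case False
    have x1: "t - a < 2*a - 1" and x2: "t - 1 < 2*a - 1" using t by linarith+
    have "(Em * Mi) $$ (t, c) = (\<Sum>r<2*a-1. (if r = t - a then int n else 0) * Mi $$ (r,c))
        + (\<Sum>r<2*a-1. (if r = t - 1 then -1 else 0) * Mi $$ (r,c))"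
      unfolding ED using False by (simp add: distrib_right sum.distrib)
    also have "\<dots> = int n * Mi $$ (t - a, c) - Mi $$ (t - 1, c)"
      using sum_single[OF x1, of "int n" "\<lambda>r. Mi $$ (r,c)"] sum_single[OF x2, of "-1" "\<lambda>r. Mi $$ (r,c)"] by simp
    also have "Mi $$ (t - a, c) = coeff_row (a - 1 + n) (2*a - 2 - t) Ps c"
      using x1 c False t by (subst Mi_entry) (auto intro!: arg_cong[where f="\<lambda>e. coeff_row _ e _ _"])
    also have "Mi $$ (t - 1, c) = coeff_row (a - 1 + n) (Suc (2*a - 2 - t)) (pderiv Ps) c"
      using x2 c False t a2 by (subst Mi_entry) (auto intro!: arg_cong[where f="\<lambda>e. coeff_row _ e _ _"])
    finally show ?thesis using False gr by simp
  qed
qed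

lemma M2_P: assumes r: "r < a" and cc: "cc \<le> r"
  shows "(Em * Mi) $$ (r, cc) = (if cc = r then int n else 0)"
proof -
  have t: "r < 2*a - 1" and c: "cc < a - 1 + n" using r cc a2 nab by linarith+
  have K: "a - 1 + n - 1 - cc - (a - 1 - r) = n - 1 + r - cc" and e: "a - 1 - r \<le> a - 1 + n - 1 - cc"
    using r cc a2 nab n3 by linarith+
  have "(Em * Mi) $$ (r, cc) = coeff (pderiv Ps) (n - 1 + r - cc)"
    using M2_entry[OF t c] r e K by (simp add: coeff_row_def Let_def)
  also have "\<dots> = (if cc = r then int n else 0)" using cc n3 by (subst coeff_dPs) auto
  finally show ?thesis .
qed

lemma M2_F: assumes r1: "a \<le> r" and r2: "r < 2*a - 1" and cc: "cc \<le> r" and c: "cc < a - 1 + n"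
  shows "(Em * Mi) $$ (r, cc) = g (b + r - cc)"
proof -
  have K: "a - 1 + n - 1 - cc - (2*a - 2 - r) = b + r - cc" and e: "2*a - 2 - r \<le> a - 1 + n - 1 - cc"
    using r1 r2 cc a2 nab n3 c by linarith+
  show ?thesis using M2_entry[OF r2 c] r1 e K by simp
qed

lemma M2_last: assumes i: "i \<le> b"
  shows "(Em * Mi) $$ (2*a - 2, a - 1 + n - i - 1) = g i"
proof -
  have r2: "2*a - 2 < 2*a - 1" and c: "a - 1 + n - i - 1 < a - 1 + n" and na: "\<not> 2*a - 2 < a"
    using a2 nab i b1 by linarith+
  have K: "a - 1 + n - 1 - (a - 1 + n - i - 1) - (2*a - 2 - (2*a - 2)) = i"
    using a2 nab i b1 by linarith
  show ?thesis using M2_entry[OF r2 c] na K by simp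
qed

lemma dp_M2: "dp (Em * Mi) = smult (int n ^ a * g b ^ (a - 2) * (int n * (int n - int b))) (Gx b)"
proof (rule poly_eqI)
  fix i
  let ?M = "Em * Mi"
  have dr: "dim_row ?M = 2*a - 1" and dc: "dim_col ?M = a - 1 + n" using Mt_dims by (simp_all add: Em_def)
  have qp: "a - 1 + n - (2*a - 1) = b" using nab a2 by linarith
  show "coeff (dp ?M) i = coeff (smult (int n ^ a * g b ^ (a - 2) * (int n * (int n - int b))) (Gx b)) i"
  proof (cases "i \<le> b")
    case True
    define A where "A = mat (2*a - 1) (2*a - 1) (\<lambda>(r, cc). if cc < 2*a - 1 - 1 then ?M $$ (r, cc) else ?M $$ (r, a - 1 + n - i - 1))"
    have Ac: "A \<in> carrier_mat (2*a - 1) (2*a - 1)" by (simp add: A_def)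
    have ut: "upper_triangular A"
    proof (unfold upper_triangular_def, intro allI impI)
      fix r cc assume r: "r < dim_row A" and ccr: "cc < r"
      then have rp: "r < 2*a - 1" and ccp: "cc < 2*a - 1 - 1" by (auto simp: A_def)
      have "A $$ (r, cc) = ?M $$ (r, cc)" using rp ccp by (simp add: A_def)
      also have "\<dots> = 0"
      proof (cases "r < a")
        case True
        then show ?thesis using M2_P[OF True] ccr by simp
      next
        case False
        have "?M $$ (r, cc) = g (b + r - cc)" using False rp ccr nab by (intro M2_F) auto
        also have "\<dots> = 0" using ccr by (intro g_big) linarith
        finally show ?thesis .
      qed
      finally show "A $$ (r, cc) = 0" .
    qed
    have diag: "A $$ (r, r) = (if r < a then int n else if r < 2*a - 2 then g b else g i)" if rp: "r < 2*a - 1" for r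
    proof (cases "r < 2*a - 2")
      case True
      then have "r < 2*a - 1 - 1" by linarith
      then have "A $$ (r, r) = ?M $$ (r, r)" using rp by (simp add: A_def)
      also have "\<dots> = (if r < a then int n else g b)"
      proof (cases "r < a")
        case True
        then show ?thesis using M2_P[OF True] by simp
      next
        case False
        then show ?thesis using M2_F[of r r] rp nab by simp
      qed
      finally show ?thesis using True by simp
    next
      case False
      then have r: "r = 2*a - 2" using rp by linarith
      then have "A $$ (r, r) = ?M $$ (2*a - 2, a - 1 + n - i - 1)" using rp a2 by (simp add: A_def)
      also have "\<dots> = g i" by (rule M2_last[OF True])
      moreover have "\<not> (2*a - 2 < a)" using a2 by linarith
      ultimately show ?thesis using r by simp
    qed
    have "det A = (\<Prod>r = 0..<2*a - 1. A $$ (r, r))"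
      using det_upper_triangular[OF ut Ac] by (simp add: prod_list_diag_prod A_def)
    also have "\<dots> = (\<Prod>r = 0..<2*a - 1. (if r < a then int n else if r < 2*a - 2 then g b else g i))"
      by (rule prod.cong) (auto simp: diag)
    also have "\<dots> = int n ^ a * g b ^ (a - 2) * g i"
    proof -
      let ?f = "\<lambda>r. (if r < a then int n else if r < 2*a - 2 then g b else g i)"
      have s0: "prod ?f {0..<2*a - 2} * prod ?f {2*a - 2..<2*a - 1} = prod ?f {0..<2*a - 1}"
        by (rule prod.atLeastLessThan_concat) (use a2 in auto)
      have s00: "prod ?f {0..<a} * prod ?f {a..<2*a - 2} = prod ?f {0..<2*a - 2}"
        by (rule prod.atLeastLessThan_concat) (use a2 in auto)
      have s1: "prod ?f {0..<2*a - 1} = prod ?f {0..<a} * prod ?f {a..<2*a - 2} * prod ?f {2*a - 2..<2*a - 1}"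
        using s0 s00 by simp
      have p1: "prod ?f {0..<a} = int n ^ a"
      proof -
        have "prod ?f {0..<a} = prod (\<lambda>_. int n) {0..<a}" by (rule prod.cong) auto
        then show ?thesis by simp
      qed
      have p2: "prod ?f {a..<2*a - 2} = g b ^ (a - 2)"
      proof -
        have "prod ?f {a..<2*a - 2} = prod (\<lambda>_. g b) {a..<2*a - 2}" by (rule prod.cong) auto
        then show ?thesis using a2 by simp
      qed
      have p3: "prod ?f {2*a - 2..<2*a - 1} = g i"
      proof -
        have e: "{2*a - 2..<2*a - 1} = {2*a - 2}" using a2 by auto
        have "prod ?f {2*a - 2..<2*a - 1} = ?f (2*a - 2)" unfolding e by simp
        moreover have "\<not> (2*a - 2 < a)" using a2 by linarith
        ultimately show ?thesis by simp
      qed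
      show ?thesis using s1 p1 p2 p3 by simp
    qed
    finally have dA: "det A = int n ^ a * g b ^ (a - 2) * g i" .
    have "coeff (dp ?M) i = det A"
      unfolding coeff_dp dr dc qp A_def using True by simp
    then show ?thesis using dA g_small[OF True] by (simp add: algebra_simps)
  next
    case False
    then have "coeff (Gx b) i = 0" using b1 by (simp add: coeff_Gx)
    then show ?thesis unfolding coeff_dp dr dc qp using False by simp
  qed
qed

lemma key_nz: "Dj b b (R_F n [a]) \<noteq> 0"
proof -
  have RF: "R_F n [a] = dp Mt" by (simp add: R_F_def subres_def)
  have pq: "dim_row Mt \<le> dim_col Mt" using Mt_dims nab by simp
  have mp: "map_poly (ev cs) (R_F n [a]) = dp Mi" using ev_dp[OF pq] RF by simp
  have Mic: "Mi \<in> carrier_mat (2*a - 1) (a - 1 + n)" by (rule carrier_matI) (simp_all only: index_map_mat Mt_dims)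
  have dm: "dp (Em * Mi) = smult (det Em) (dp Mi)"
    by (rule dp_mult[OF Em_carrier Mic]) (use nab in linarith)
  define C where "C = int n ^ a * g b ^ (a - 2) * (int n * (int n - int b))"
  have gb: "g b = int n * (int n - int b)" using g_small[of b] b1 by (simp add: coeff_Gx)
  have nb: "int n - int b \<noteq> 0" using nab a2 by simp
  have n0: "int n \<noteq> 0" using n3 by simp
  have C0: "C \<noteq> 0" unfolding C_def gb using nb n0 by simp
  have s1: "Dj b b (smult (det Em) (dp Mi)) = det Em ^ (2*b) * Dj b b (dp Mi)" by (rule Dj_smult) simp
  have s2: "Dj b b (smult C (Gx b)) = C^(2*b) * Dj b b (Gx b)" by (rule Dj_smult) simp
  have s3: "smult (det Em) (dp Mi) = smult C (Gx b)" using dm dp_M2 unfolding C_def by simp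
  have nz: "C^(2*b) * Dj b b (Gx b) \<noteq> 0" using C0 Dj_Gx_nz[OF b1] by simp
  have "det Em ^ (2*b) * Dj b b (dp Mi) = C^(2*b) * Dj b b (Gx b)" using s1 s2 s3 by metis
  then have "det Em ^ (2*b) * Dj b b (dp Mi) \<noteq> 0" using nz by argo
  then have X: "Dj b b (dp Mi) \<noteq> 0" by (metis mult_zero_right)
  have "ev cs (Dj b b (R_F n [a])) = Dj b b (map_poly (ev cs) (R_F n [a]))" by (rule ev_Dj) simp
  then have "ev cs (Dj b b (R_F n [a])) \<noteq> 0" using X mp by simp
  then show ?thesis by (metis ev_zero)
qed

end




lemma finite_T_mu: "finite (T_mu n mu)"
proof -
  have "{coeff (R_F n gamma) k | gamma k. gamma \<in> partitions n \<and> lex_ge gamma (conjugate mu) \<and> k \<le> degree (R_F n gamma)}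
     \<subseteq> (\<Union>gamma\<in>partitions n. (\<lambda>k. coeff (R_F n gamma) k) ` {..degree (R_F n gamma)})" by auto
  moreover have "finite (\<Union>gamma\<in>partitions n. (\<lambda>k. coeff (R_F n gamma) k) ` {..degree (R_F n gamma)})"
    using finite_partitions by auto
  moreover have "{Dj (s_mu n mu i) j (G_mu n mu i) | i j. i \<le> hd mu - 1 \<and> 1 \<le> j \<and> j \<le> conjugate mu ! i}
     \<subseteq> (\<Union>i\<in>{..hd mu - 1}. (\<lambda>j. Dj (s_mu n mu i) j (G_mu n mu i)) ` {..conjugate mu ! i})" by auto
  moreover have "finite (\<Union>i\<in>{..hd mu - 1}. (\<lambda>j. Dj (s_mu n mu i) j (G_mu n mu i)) ` {..conjugate mu ! i})"
    by auto
  ultimately show ?thesis unfolding T_mu_def by (meson finite_Un finite_subset)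
qed

lemma sorted_rep: "sorted_wrt (\<lambda>x y. y \<le> x) (replicate k (c::nat))"
  by (induction k) auto

definition wit :: "nat \<Rightarrow> nat list" where
  "wit n = replicate (n div 2) 2 @ (if odd n then [1] else [])"

lemma wit_props: assumes n: "n \<ge> 3"
  shows "wit n \<in> partitions n" "conjugate (wit n) = [n - n div 2, n div 2]" "hd (wit n) = 2"
proof -
  let ?b = "n div 2"
  have b1: "?b \<ge> 1" using n by simp
  show "wit n \<in> partitions n"
    unfolding partitions_def wit_def using n
    by (auto simp: sorted_wrt_append sum_list_replicate sorted_rep) presburger
  show "hd (wit n) = 2" using b1 by (cases ?b) (auto simp: wit_def)
  have mx: "Max (insert 0 (set (wit n))) = 2" using b1 by (auto simp: wit_def intro!: Max_eqI)
  have l1: "length (filter (\<lambda>m. 1 \<le> m) (wit n)) = n - n div 2"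
    by (auto simp: wit_def filter_replicate) presburger+
  have l2: "length (filter (\<lambda>m. 2 \<le> m) (wit n)) = n div 2"
    by (auto simp: wit_def filter_replicate)
  have l2': "length (filter (\<lambda>m. Suc (Suc 0) \<le> m) (wit n)) = n div 2" using l2 by (simp add: numeral_2_eq_2)
  have l1': "length (filter (\<lambda>m. Suc 0 \<le> m) (wit n)) = n - n div 2" using l1 by simp
  show "conjugate (wit n) = [n - n div 2, n div 2]"
    unfolding conjugate_def mx using l1' l2' by (simp add: upt_rec numeral_2_eq_2)
qed

theorem main_result:
  fixes n :: nat
  assumes n: "n \<ge> 3"
  shows "d_QXY n = n * (n - 1)"
proof -
  let ?U = "\<Union>mu\<in>partitions n. T_mu n mu"
  have fin: "finite ?U" using finite_partitions finite_T_mu by auto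
  have ub: "\<And>x. x \<in> ?U \<Longrightarrow> total_degree x \<le> n * (n - 1)"
    using T_mu_bound[OF n] by blast
  let ?a = "n - n div 2" and ?b = "n div 2"
  have a2: "?a \<ge> 2" and b1: "?b \<ge> 1" and nab: "?a + ?b = n" using n by auto
  let ?mu = "wit n"
  let ?x = "Dj ?b ?b (R_F n [?a])"
  have mu: "?mu \<in> partitions n" and cm: "conjugate ?mu = [?a, ?b]" and hd: "hd ?mu = 2"
    using wit_props[OF n] by auto
  have "?x = Dj (s_mu n ?mu 1) ?b (G_mu n ?mu 1)"
    using cm nab by (simp add: s_mu_def G_mu_def)
  then have "?x \<in> {Dj (s_mu n ?mu i) j (G_mu n ?mu i) | i j. i \<le> hd ?mu - 1 \<and> 1 \<le> j \<and> j \<le> conjugate ?mu ! i}"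
    unfolding mem_Collect_eq by (intro exI[of _ 1] exI[of _ ?b]) (use hd cm b1 in auto)
  then have "?x \<in> T_mu n ?mu" unfolding T_mu_def by (rule UnI2)
  then have xU: "?x \<in> ?U" using mu by auto
  have d0: "delta0 (FsP n [?a]) [?a] = ?a - 1" using delta0_single[of ?a n] a2 n by simp
  have "homog (2 * ?b * (delta0 (FsP n [?a]) [?a] + sum_list [?a])) ?x"
    by (rule homog_Dj[OF phom_RF]) (use nab in auto)
  moreover have dd: "delta0 (FsP n [?a]) [?a] + sum_list [?a] = 2 * ?a - 1" using d0 a2 by (simp del: delta0_def; linarith)
  ultimately have hx: "homog (2 * ?b * (2 * ?a - 1)) ?x" by (simp only: dd)
  have eq: "2 * ?b * (2 * ?a - 1) = n * (n - 1)"
  proof (cases "even n")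
    case True
    then obtain k where "n = 2 * k" by blast
    then show ?thesis by (simp add: algebra_simps)
  next
    case False
    then obtain k where "n = 2 * k + 1" using oddE by blast
    then show ?thesis by (simp add: algebra_simps)
  qed
  have nz: "?x \<noteq> 0" using key_nz[OF n a2 b1 nab] .
  have tx: "total_degree ?x = n * (n - 1)" using total_degree_eq[OF hx nz] eq by simp
  show ?thesis unfolding d_QXY_def
  proof (rule Max_eqI)
    show "finite (total_degree ` ?U)" using fin by simp
    show "\<And>y. y \<in> total_degree ` ?U \<Longrightarrow> y \<le> n * (n - 1)" using ub by auto
    show "n * (n - 1) \<in> total_degree ` ?U" using xU tx by (metis image_eqI)
  qed
qed


theorem mainTheorem7:
  fixes n :: nat
  assumes "n \<ge> 3"
  shows "d_QXY n = n * (n - 1)"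
  using main_result[OF assms] .

end
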